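(* Let $(\mathcal{M},\phi,\xi,\eta,g)$ be a Riemannian $\Pi$-manifold of dimension $2n+1$. Then $\mathcal{M}$ belongs to the class $\mathcal{U}_1=\mathcal{F}_1\oplus\mathcal{F}_2\oplus\mathcal{F}_4\oplus\mathcal{F}_5\oplus\mathcal{F}_6\oplus\mathcal{F}_8\oplus\mathcal{F}_9\oplus\mathcal{F}_{10}\oplus\mathcal{F}_{11}$ if and only if $N(\phi x,\phi y)=0$ for all vector fields $x,y$ on $\mathcal{M}$.
   Context: A Riemannian $\Pi$-manifold $(\mathcal{M},\phi,\xi,\eta,g)$ is a $(2n+1)$-dimensional smooth manifold with a $(1,1)$-tensor field $\phi$, a vector field $\xi$, a 1-form $\eta$ and a Riemannian metric $g$ such that $\phi\xi=0$, $\phi^2=I-\eta\otimes\xi$, $\eta\circ\phi=0$, $\eta(\xi)=1$, $\operatorname{tr}\phi=0$, $g(\phi x,\phi y)=g(x,y)-\eta(x)\eta(y)$ (hence $g(\phi x,y)=g(x,\phi y)$, $g(x,\xi)=\eta(x)$). Let $\nabla$ be the Levi-Civita connection of $g$ and $F(x,y,z)=g((\nabla_x\phi)y,z)$. With respect to a basis $\{\xi,e_1,\dots,e_{2n}\}$ of $T_p\mathcal{M}$ and $(g^{ij})$ the inverse matrix of $(g_{ij})$, the Lee forms are $\theta=g^{ij}F(e_i,e_j,\cdot)$, $\theta^*=g^{ij}F(e_i,\phi e_j,\cdot)$, $\omega=F(\xi,\xi,\cdot)$. The basic classes $\mathcal{F}_1,\dots,\mathcal{F}_{11}$ are defined by the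 following conditions on $F$ (for all $x,y,z$): $\mathcal{F}_1$: $F(x,y,z)=\frac{1}{2n}\{g(\phi x,\phi y)\theta(\phi^2z)+g(\phi x,\phi z)\theta(\phi^2y)-g(x,\phi y)\theta(\phi z)-g(x,\phi z)\theta(\phi y)\}$; $\mathcal{F}_2$: $F(\xi,y,z)=0$, $F(x,\xi,z)=0$, $\theta=0$, $F(x,y,\phi z)+F(y,z,\phi x)+F(z,x,\phi y)=0$; $\mathcal{F}_3$: $F(\xi,y,z)=0$, $F(x,\xi,z)=0$, $F(x,y,z)+F(y,z,x)+F(z,x,y)=0$; $\mathcal{F}_4$: $F(x,y,z)=\frac{\theta(\xi)}{2n}\{g(\phi x,\phi y)\eta(z)+g(\phi x,\phi z)\eta(y)\}$; $\mathcal{F}_5$: $F(x,y,z)=\frac{\theta^*(\xi)}{2n}\{g(x,\phi y)\eta(z)+g(x,\phi z)\eta(y)\}$; $\mathcal{F}_6$: $F(x,y,z)=F(x,y,\xi)\eta(z)+F(x,z,\xi)\eta(y)$, $F(x,y,\xi)=F(y,x,\xi)=F(\phi x,\phi y,\xi)$; $\mathcal{F}_7$: same first condition, $F(x,y,\xi)=-F(y,x,\xi)=F(\phi x,\phi y,\xi)$; $\mathcal{F}_8$: same first condition, $F(x,y,\xi)=F(y,x,\xi)=-F(\phi x,\phi y,\xi)$; $\mathcal{F}_9$: same first condition, $F(x,y,\xi)=-F(y,x,\xi)=-F(\phi x,\phi y,\xi)$; $\mathcal{F}_{10}$: $F(x,y,z)=-\eta(x)F(\xi,\phi y,\phi z)$;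 $\mathcal{F}_{11}$: $F(x,y,z)=\eta(x)\{\eta(y)\omega(z)+\eta(z)\omega(y)\}$. At each point, the space of $(0,3)$-tensors with the symmetries of $F$ (namely $F(x,y,z)=F(x,z,y)=-F(x,\phi y,\phi z)+\eta(y)F(x,\xi,z)+\eta(z)F(x,y,\xi)$) is the orthogonal direct sum of the eleven subspaces given by these conditions; $\mathcal{M}$ belongs to a direct sum $\mathcal{F}_{i_1}\oplus\cdots\oplus\mathcal{F}_{i_k}$ if at every point $F$ lies in the sum of the corresponding subspaces. The Nijenhuis tensor is $N(x,y)=(\nabla_{\phi x}\phi)y-\phi(\nabla_x\phi)y-(\nabla_x\eta)(y)\xi-(\nabla_{\phi y}\phi)x+\phi(\nabla_y\phi)x+(\nabla_y\eta)(x)\xi$. *)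

theory Defs
  imports "HOL-Analysis.Analysis"
begin

section \<open>Local (chart) model of a Riemannian Pi-manifold\<close>

coinductive smooth_on :: "'a::euclidean_space set \<Rightarrow> ('a \<Rightarrow> real) \<Rightarrow> bool" for U where
  "f differentiable_on U \<Longrightarrow> (\<forall>b\<in>Basis. smooth_on U (\<lambda>p. frechet_derivative f (at p) b))
     \<Longrightarrow> smooth_on U f"

definition ginv :: "('a::euclidean_space \<Rightarrow> 'a \<Rightarrow> real) \<Rightarrow> 'a \<Rightarrow> 'a \<Rightarrow> real" where
  "ginv G = (THE h. (\<forall>i j. (i \<notin> Basis \<or> j \<notin> Basis) \<longrightarrow> h i j = 0) \<and>
      (\<forall>i\<in>Basis. \<forall>k\<in>Basis. (\<Sum>j\<in>Basis. G i j * h j k) = (if i = k then 1 else 0)))"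

definition lee_theta :: "('a::euclidean_space \<Rightarrow> 'a \<Rightarrow> real) \<Rightarrow> ('a \<Rightarrow> 'a \<Rightarrow> 'a \<Rightarrow> real) \<Rightarrow> 'a \<Rightarrow> real" where
  "lee_theta G T z = (\<Sum>i\<in>Basis. \<Sum>j\<in>Basis. ginv G i j * T i j z)"

definition lee_theta_star :: "('a::euclidean_space \<Rightarrow> 'a) \<Rightarrow> ('a \<Rightarrow> 'a \<Rightarrow> real) \<Rightarrow> ('a \<Rightarrow> 'a \<Rightarrow> 'a \<Rightarrow> real) \<Rightarrow> 'a \<Rightarrow> real" where
  "lee_theta_star f G T z = (\<Sum>i\<in>Basis. \<Sum>j\<in>Basis. ginv G i j * T i (f j) z)"

definition lee_omega :: "'a \<Rightarrow> ('a \<Rightarrow> 'a \<Rightarrow> 'a \<Rightarrow> real) \<Rightarrow> 'a \<Rightarrow> real" where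
  "lee_omega e T z = T e e z"

text \<open>The space of (0,3)-tensors (at a point with structure f = phi_p, e = xi_p,
  t = eta_p, G = g_p) having the symmetries of F.\<close>

definition F_space :: "('a::euclidean_space \<Rightarrow> 'a) \<Rightarrow> 'a \<Rightarrow> ('a \<Rightarrow> real) \<Rightarrow> ('a \<Rightarrow> 'a \<Rightarrow> 'a \<Rightarrow> real) \<Rightarrow> bool" where
  "F_space f e t T \<longleftrightarrow>
     (\<forall>y z. linear (\<lambda>x. T x y z)) \<and> (\<forall>x z. linear (\<lambda>y. T x y z)) \<and> (\<forall>x y. linear (\<lambda>z. T x y z)) \<and>
     (\<forall>x y z. T x y z = T x z y) \<and>
     (\<forall>x y z. T x y z = - T x (f y) (f z) + t y * T x e z + t z * T x y e)"

definition F_cond :: "nat \<Rightarrow> nat \<Rightarrow> ('a::euclidean_space \<Rightarrow> 'a) \<Rightarrow> 'a \<Rightarrow> ('a \<Rightarrow> real) \<Rightarrow> ('a \<Rightarrow> 'a \<Rightarrow> real)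
    \<Rightarrow> ('a \<Rightarrow> 'a \<Rightarrow> 'a \<Rightarrow> real) \<Rightarrow> bool" where
  "F_cond i n f e t G T =
    (if i = 1 then (\<forall>x y z. T x y z = 1 / (2 * real n) *
        (G (f x) (f y) * lee_theta G T (f (f z)) + G (f x) (f z) * lee_theta G T (f (f y))
         - G x (f y) * lee_theta G T (f z) - G x (f z) * lee_theta G T (f y)))
     else if i = 2 then (\<forall>x y z. T e y z = 0 \<and> T x e z = 0 \<and> lee_theta G T z = 0 \<and>
        T x y (f z) + T y z (f x) + T z x (f y) = 0)
     else if i = 3 then (\<forall>x y z. T e y z = 0 \<and> T x e z = 0 \<and>
        T x y z + T y z x + T z x y = 0)
     else if i = 4 then (\<forall>x y z. T x y z = lee_theta G T e / (2 * real n) *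
        (G (f x) (f y) * t z + G (f x) (f z) * t y))
     else if i = 5 then (\<forall>x y z. T x y z = lee_theta_star f G T e / (2 * real n) *
        (G x (f y) * t z + G x (f z) * t y))
     else if i = 6 then (\<forall>x y z. T x y z = T x y e * t z + T x z e * t y \<and>
        T x y e = T y x e \<and> T x y e = T (f x) (f y) e)
     else if i = 7 then (\<forall>x y z. T x y z = T x y e * t z + T x z e * t y \<and>
        T x y e = - T y x e \<and> T x y e = T (f x) (f y) e)
     else if i = 8 then (\<forall>x y z. T x y z = T x y e * t z + T x z e * t y \<and>
        T x y e = T y x e \<and> T x y e = - T (f x) (f y) e)
     else if i = 9 then (\<forall>x y z. T x y z = T x y e * t z + T x z e * t y \<and>
        T x y e = - T y x e \<and> T x y e = - T (f x) (f y) e)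
     else if i = 10 then (\<forall>x y z. T x y z = - t x * T e (f y) (f z))
     else if i = 11 then (\<forall>x y z. T x y z = t x * (t y * lee_omega e T z + t z * lee_omega e T y))
     else False)"

definition in_class_sum :: "nat set \<Rightarrow> nat \<Rightarrow> ('a::euclidean_space \<Rightarrow> 'a) \<Rightarrow> 'a \<Rightarrow> ('a \<Rightarrow> real)
    \<Rightarrow> ('a \<Rightarrow> 'a \<Rightarrow> real) \<Rightarrow> ('a \<Rightarrow> 'a \<Rightarrow> 'a \<Rightarrow> real) \<Rightarrow> bool" where
  "in_class_sum I n f e t G T \<longleftrightarrow>
     (\<exists>A. (\<forall>i\<in>I. F_space f e t (A i) \<and> F_cond i n f e t G (A i)) \<and>
          (\<forall>x y z. T x y z = (\<Sum>i\<in>I. A i x y z)))"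

definition U1_classes :: "nat set" where
  "U1_classes = {1, 2, 4, 5, 6, 8, 9, 10, 11}"

text \<open>Riemannian Pi-structure on an open chart domain U (fields are given by
  their values at points p; phi p, eta p, g p are the tensors at p).\<close>

definition riem_pi_manifold ::
  "nat \<Rightarrow> 'a::euclidean_space set \<Rightarrow> ('a \<Rightarrow> 'a \<Rightarrow> 'a) \<Rightarrow> ('a \<Rightarrow> 'a) \<Rightarrow> ('a \<Rightarrow> 'a \<Rightarrow> real)
     \<Rightarrow> ('a \<Rightarrow> 'a \<Rightarrow> 'a \<Rightarrow> real) \<Rightarrow> bool" where
  "riem_pi_manifold n U phi xi eta g \<longleftrightarrow>
     open U \<and> DIM('a) = 2 * n + 1 \<and>
     (\<forall>b\<in>Basis. \<forall>b'\<in>Basis.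
        smooth_on U (\<lambda>p. phi p b \<bullet> b') \<and> smooth_on U (\<lambda>p. xi p \<bullet> b) \<and>
        smooth_on U (\<lambda>p. eta p b) \<and> smooth_on U (\<lambda>p. g p b b')) \<and>
     (\<forall>p\<in>U.
        linear (phi p) \<and> linear (eta p) \<and> bilinear (g p) \<and>
        (\<forall>x y. g p x y = g p y x) \<and> (\<forall>x. x \<noteq> 0 \<longrightarrow> g p x x > 0) \<and>
        phi p (xi p) = 0 \<and>
        (\<forall>x. phi p (phi p x) = x - eta p x *\<^sub>R xi p) \<and>
        (\<forall>x. eta p (phi p x) = 0) \<and>
        eta p (xi p) = 1 \<and>
        (\<Sum>b\<in>Basis. phi p b \<bullet> b) = 0 \<and>
        (\<forall>x y. g p (phi p x) (phi p y) = g p x y - eta p x * eta p y))"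

text \<open>Levi-Civita connection of g: Christoffel term via the Koszul formula.\<close>

definition christoffel :: "('a::euclidean_space \<Rightarrow> 'a \<Rightarrow> 'a \<Rightarrow> real) \<Rightarrow> 'a \<Rightarrow> 'a \<Rightarrow> 'a \<Rightarrow> 'a" where
  "christoffel g p x y = (THE w. \<forall>z. g p w z = 1/2 *
      (frechet_derivative (\<lambda>q. g q y z) (at p) x + frechet_derivative (\<lambda>q. g q x z) (at p) y
       - frechet_derivative (\<lambda>q. g q x y) (at p) z))"

definition nabla :: "('a::euclidean_space \<Rightarrow> 'a \<Rightarrow> 'a \<Rightarrow> real) \<Rightarrow> 'a \<Rightarrow> 'a \<Rightarrow> ('a \<Rightarrow> 'a) \<Rightarrow> 'a" where
  "nabla g p x Y = frechet_derivative Y (at p) x + christoffel g p x (Y p)"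

text \<open>(nabla_x phi) y = nabla_x (phi Y) - phi (nabla_x Y), (nabla_x eta)(y) = x(eta Y) - eta(nabla_x Y),
  with Y the (constant in the chart) vector field extending y; both are tensorial.\<close>

definition nabla_phi :: "('a::euclidean_space \<Rightarrow> 'a \<Rightarrow> 'a \<Rightarrow> real) \<Rightarrow> ('a \<Rightarrow> 'a \<Rightarrow> 'a) \<Rightarrow> 'a \<Rightarrow> 'a \<Rightarrow> 'a \<Rightarrow> 'a" where
  "nabla_phi g phi p x y = nabla g p x (\<lambda>q. phi q y) - phi p (nabla g p x (\<lambda>q. y))"

definition nabla_eta :: "('a::euclidean_space \<Rightarrow> 'a \<Rightarrow> 'a \<Rightarrow> real) \<Rightarrow> ('a \<Rightarrow> 'a \<Rightarrow> real) \<Rightarrow> 'a \<Rightarrow> 'a \<Rightarrow> 'a \<Rightarrow> real" where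
  "nabla_eta g eta p x y = frechet_derivative (\<lambda>q. eta q y) (at p) x - eta p (nabla g p x (\<lambda>q. y))"

definition F_tensor :: "('a::euclidean_space \<Rightarrow> 'a \<Rightarrow> 'a \<Rightarrow> real) \<Rightarrow> ('a \<Rightarrow> 'a \<Rightarrow> 'a) \<Rightarrow> 'a \<Rightarrow> 'a \<Rightarrow> 'a \<Rightarrow> 'a \<Rightarrow> real" where
  "F_tensor g phi p x y z = g p (nabla_phi g phi p x y) z"

definition nijenhuis :: "('a::euclidean_space \<Rightarrow> 'a \<Rightarrow> 'a \<Rightarrow> real) \<Rightarrow> ('a \<Rightarrow> 'a \<Rightarrow> 'a) \<Rightarrow> ('a \<Rightarrow> 'a)
    \<Rightarrow> ('a \<Rightarrow> 'a \<Rightarrow> real) \<Rightarrow> 'a \<Rightarrow> 'a \<Rightarrow> 'a \<Rightarrow> 'a" where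
  "nijenhuis g phi xi eta p x y =
     nabla_phi g phi p (phi p x) y - phi p (nabla_phi g phi p x y) - nabla_eta g eta p x y *\<^sub>R xi p
     - nabla_phi g phi p (phi p y) x + phi p (nabla_phi g phi p y x) + nabla_eta g eta p y x *\<^sub>R xi p"

end

theory Submission
  imports Defs
begin


definition tri :: "('a::real_vector \<Rightarrow> 'a \<Rightarrow> 'a \<Rightarrow> real) \<Rightarrow> bool" where
  "tri A \<longleftrightarrow> (\<forall>y z. linear (\<lambda>x. A x y z)) \<and> (\<forall>x z. linear (\<lambda>y. A x y z)) \<and> (\<forall>x y. linear (\<lambda>z. A x y z))"

lemma tri_lin: assumes "tri A" shows "linear (\<lambda>x. A x y z)" "linear (\<lambda>y. A x y z)" "linear (\<lambda>z. A x y z)"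
  using assms unfolding tri_def by auto

lemma tri_simps: assumes "tri A"
  shows "A (x1 + x2) y z = A x1 y z + A x2 y z" "A (x1 - x2) y z = A x1 y z - A x2 y z"
    "A (c *\<^sub>R x) y z = c * A x y z" "A 0 y z = 0" "A (- x) y z = - A x y z"
    "A x (y1 + y2) z = A x y1 z + A x y2 z" "A x (y1 - y2) z = A x y1 z - A x y2 z"
    "A x (c *\<^sub>R y) z = c * A x y z" "A x 0 z = 0" "A x (- y) z = - A x y z"
    "A x y (z1 + z2) = A x y z1 + A x y z2" "A x y (z1 - z2) = A x y z1 - A x y z2"
    "A x y (c *\<^sub>R z) = c * A x y z" "A x y 0 = 0" "A x y (- z) = - A x y z"
  using linear_add[OF tri_lin(1)[OF assms]] linear_diff[OF tri_lin(1)[OF assms]] linear_scale[OF tri_lin(1)[OF assms]]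
    linear_0[OF tri_lin(1)[OF assms]] linear_neg[OF tri_lin(1)[OF assms]]
    linear_add[OF tri_lin(2)[OF assms]] linear_diff[OF tri_lin(2)[OF assms]] linear_scale[OF tri_lin(2)[OF assms]]
    linear_0[OF tri_lin(2)[OF assms]] linear_neg[OF tri_lin(2)[OF assms]]
    linear_add[OF tri_lin(3)[OF assms]] linear_diff[OF tri_lin(3)[OF assms]] linear_scale[OF tri_lin(3)[OF assms]]
    linear_0[OF tri_lin(3)[OF assms]] linear_neg[OF tri_lin(3)[OF assms]]
  by auto

lemma F_space_tri: "F_space f e t A \<Longrightarrow> tri A"
  unfolding F_space_def tri_def by (elim conjE) (intro conjI; assumption)

definition NE :: "('a::real_vector \<Rightarrow> 'a) \<Rightarrow> 'a \<Rightarrow> ('a \<Rightarrow> real) \<Rightarrow> ('a \<Rightarrow> 'a \<Rightarrow> 'a \<Rightarrow> real) \<Rightarrow> 'a \<Rightarrow> 'a \<Rightarrow> 'a \<Rightarrow> real" where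
  "NE f e t T a b z = T (f a) b z - T a b (f z) + T a (f b) e * t z - T (f b) a z + T b a (f z) - T b (f a) e * t z"

lemma FS_diff: assumes "F_space f e t A" "F_space f e t B"
  shows "F_space f e t (\<lambda>x y z. A x y z - B x y z)"
proof -
  have tA: "tri A" and tB: "tri B" using assms F_space_tri by auto
  have "tri (\<lambda>x y z. A x y z - B x y z)" unfolding tri_def
    by (intro conjI allI; rule linearI) (simp_all add: tri_simps[OF tA] tri_simps[OF tB] algebra_simps)
  moreover have "A x y z - B x y z = A x z y - B x z y" for x y z
    using assms unfolding F_space_def by metis
  moreover have "A x y z - B x y z = - (A x (f y) (f z) - B x (f y) (f z)) + t y * (A x e z - B x e z) + t z * (A x y e - B x y e)" for x y z
  proof -
    have "A x y z = - A x (f y) (f z) + t y * A x e z + t z * A x y e"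
      "B x y z = - B x (f y) (f z) + t y * B x e z + t z * B x y e"
      using assms unfolding F_space_def by blast+
    then show ?thesis by (simp add: algebra_simps)
  qed
  ultimately show ?thesis unfolding F_space_def tri_def by blast
qed

definition Aof :: "('a \<Rightarrow> 'a \<Rightarrow> real) \<Rightarrow> ('a \<Rightarrow> real) \<Rightarrow> 'a \<Rightarrow> 'a \<Rightarrow> 'a \<Rightarrow> real" where
  "Aof S t x y z = S x y * t z + S x z * t y"

locale pis =
  fixes n :: nat and f :: "'a::euclidean_space \<Rightarrow> 'a" and e :: 'a and t :: "'a \<Rightarrow> real"
    and G :: "'a \<Rightarrow> 'a \<Rightarrow> real"
  assumes lf: "linear f" and lt: "linear t" and bG: "bilinear G"
    and Gsym: "\<And>x y. G x y = G y x" and Gpos: "\<And>x. x \<noteq> 0 \<Longrightarrow> G x x > 0"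
    and fe: "f e = 0" and ff: "\<And>x. f (f x) = x - t x *\<^sub>R e" and tf: "\<And>x. t (f x) = 0"
    and te: "t e = 1"
    and trf: "(\<Sum>b\<in>Basis. f b \<bullet> b) = 0" and Gff: "\<And>x y. G (f x) (f y) = G x y - t x * t y"
    and dim: "DIM('a) = 2*n+1"
begin

lemma linGl: "linear (\<lambda>x. G x y)" using bG unfolding bilinear_def by auto
lemma linGr: "linear (G x)" using bG unfolding bilinear_def by auto

lemmas fsimps = linear_add[OF lf] linear_diff[OF lf] linear_scale[OF lf] linear_neg[OF lf] linear_0[OF lf]
lemmas tsimps = linear_add[OF lt] linear_diff[OF lt] linear_scale[OF lt] linear_neg[OF lt] linear_0[OF lt]
lemmas Glsimps = linear_add[OF linGl] linear_diff[OF linGl] linear_scale[OF linGl] linear_neg[OF linGl] linear_0[OF linGl]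
lemmas Grsimps = linear_add[OF linGr] linear_diff[OF linGr] linear_scale[OF linGr] linear_neg[OF linGr] linear_0[OF linGr]
lemmas lsimps = fsimps tsimps Glsimps Grsimps

lemma Gl0[simp]: "G 0 y = 0" and Gr0[simp]: "G x 0 = 0"
  using Glsimps(5) Grsimps(5) by auto

lemma Ge[simp]: "G x e = t x"
proof -
  have "G (f x) (f e) = G x e - t x * t e" by (rule Gff)
  then show ?thesis by (simp add: fe te)
qed
lemma eG[simp]: "G e x = t x" using Ge Gsym by metis

lemma Gf: "G (f x) y = G x (f y)"
proof -
  have y: "y = f (f y) + t y *\<^sub>R e" by (simp add: ff)
  have "G (f x) y = G (f x) (f (f y)) + t y * G (f x) e"
    by (subst y, simp add: Grsimps)
  also have "\<dots> = G x (f y)" by (simp add: Gff tf)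
  finally show ?thesis .
qed

lemma fff[simp]: "f (f (f x)) = f x" by (simp add: ff fsimps fe)

lemma riesz: assumes ll: "linear l" shows "\<exists>!w. \<forall>z. G w z = l z"
proof -
  define M where "M w = (\<Sum>b\<in>Basis. G w b *\<^sub>R b)" for w
  have lM: "linear M" unfolding M_def
    by (rule linearI) (simp_all add: Glsimps scaleR_add_left sum.distrib scaleR_sum_right)
  have Gexp: "G w z = (\<Sum>b\<in>Basis. (z \<bullet> b) * G w b)" for w z
  proof -
    have "G w z = G w (\<Sum>b\<in>Basis. (z \<bullet> b) *\<^sub>R b)" by (simp add: euclidean_representation)
    also have "\<dots> = (\<Sum>b\<in>Basis. (z \<bullet> b) * G w b)" by (simp add: linear_sum[OF linGr] Grsimps)
    finally show ?thesis .
  qed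
  have lexp: "l z = (\<Sum>b\<in>Basis. (z \<bullet> b) * l b)" for z
  proof -
    have "l z = l (\<Sum>b\<in>Basis. (z \<bullet> b) *\<^sub>R b)" by (simp add: euclidean_representation)
    also have "\<dots> = (\<Sum>b\<in>Basis. (z \<bullet> b) * l b)" by (simp add: linear_sum[OF ll] linear_scale[OF ll])
    finally show ?thesis .
  qed
  have Mb: "M w \<bullet> b = G w b" if "b \<in> Basis" for w b
    using that unfolding M_def by (simp add: inner_sum_left inner_Basis if_distrib cong: if_cong)
  have "inj M"
  proof (rule linear_injective_0[OF lM, THEN iffD2], intro allI impI)
    fix w assume "M w = 0"
    then have "\<forall>b\<in>Basis. G w b = 0" using Mb by (metis inner_zero_left)
    then have "G w w = 0" by (subst Gexp) simp
    then show "w = 0" using Gpos by force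
  qed
  then have "surj M" using lM linear_injective_imp_surjective by blast
  then obtain w where w: "M w = (\<Sum>b\<in>Basis. l b *\<^sub>R b)" by (metis surjD)
  have "G w b = l b" if "b \<in> Basis" for b
    using Mb[OF that, of w] w that by (simp add: inner_sum_left inner_Basis if_distrib cong: if_cong)
  then have ex: "\<forall>z. G w z = l z" by (metis (no_types, lifting) Gexp lexp sum.cong)
  moreover have "w' = w" if "\<forall>z. G w' z = l z" for w'
  proof -
    have "G (w' - w) (w' - w) = 0" using that ex by (simp add: Glsimps)
    then show ?thesis using Gpos[of "w' - w"] by auto
  qed
  ultimately show ?thesis by blast
qed


lemma horiz:
  assumes tA: "tri A" and k1: "\<And>y z. A e y z = 0" and k2: "\<And>x z. A x e z = 0"
    and Asym: "\<And>x y z. A x y z = A x z y" and Aphi: "\<And>x y z. A x (f y) (f z) = - A x y z"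
  shows "(\<forall>x y z. A x y (f z) + A y z (f x) + A z x (f y) = 0) \<longleftrightarrow>
         (\<forall>x y z. A x (f y) z - A (f x) (f y) (f z) - A y (f x) z + A (f y) (f x) (f z) = 0)"
proof -
  have k3: "A x y e = 0" for x y using k2[of x y] Asym[of x y e] by simp
  have ff1: "A (f (f x)) y z = A x y z" and ff2: "A x (f (f y)) z = A x y z" and ff3: "A x y (f (f z)) = A x y z" for x y z
    by (simp_all add: ff tri_simps[OF tA] k1 k2 k3)
  have Aphi2: "A x (f y) z = - A x y (f z)" for x y z
    using Aphi[of x "f y" z] by (simp add: ff2)
  show ?thesis
  proof
    assume H0: "\<forall>x y z. A x y (f z) + A y z (f x) + A z x (f y) = 0"
    have H: "A x y (f z) + A y z (f x) + A z x (f y) = 0" for x y z using H0 by blast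
    show "\<forall>x y z. A x (f y) z - A (f x) (f y) (f z) - A y (f x) z + A (f y) (f x) (f z) = 0"
    proof (intro allI)
      fix a b z
      have h2: "A z (f b) a + A (f b) (f a) (f z) + A (f a) z b = 0"
        using H[of z "f b" "f a"] by (simp add: ff1 ff2 ff3)
      show "A a (f b) z - A (f a) (f b) (f z) - A b (f a) z + A (f b) (f a) (f z) = 0"
        using H[of a b z] h2 Aphi2[of a b z] Asym[of b z "f a"] Asym[of z a "f b"] Asym[of "f a" b z] Aphi[of "f a" b z]
        by linarith
    qed
  next
    assume H0: "\<forall>x y z. A x (f y) z - A (f x) (f y) (f z) - A y (f x) z + A (f y) (f x) (f z) = 0"
    have H: "A x (f y) z - A (f x) (f y) (f z) - A y (f x) z + A (f y) (f x) (f z) = 0" for x y z using H0 by blast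
    show "\<forall>x y z. A x y (f z) + A y z (f x) + A z x (f y) = 0"
    proof (intro allI)
      fix a b z
      show "A a b (f z) + A b z (f a) + A z a (f b) = 0"
        using H[of a b z] H[of a z b] H[of b z a] Asym[of a b "f z"] Aphi2[of a b z] Asym[of b a "f z"] Asym[of b z "f a"] Aphi2[of b a z] Asym[of z a "f b"] Aphi2[of z a b] Asym[of "f a" "f b" "f z"] Asym[of "f b" "f a" "f z"] Asym[of "f z" "f a" "f b"]
        by linarith
    qed
  qed
qed


definition wv :: "'a \<Rightarrow> 'a" where "wv b = (THE w. \<forall>z. G w z = z \<bullet> b)"

lemma wv: "G (wv b) z = z \<bullet> b"
proof -
  have "linear (\<lambda>z. z \<bullet> b)" by (simp add: bounded_linear_inner_left bounded_linear.linear)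
  from theI'[OF riesz[OF this]] show ?thesis unfolding wv_def by blast
qed

lemma lexp: assumes "linear l" shows "l z = (\<Sum>b\<in>Basis. (z \<bullet> b) * l b)"
proof -
  have "l z = l (\<Sum>b\<in>Basis. (z \<bullet> b) *\<^sub>R b)" by (simp add: euclidean_representation)
  also have "\<dots> = (\<Sum>b\<in>Basis. (z \<bullet> b) * l b)" by (simp add: linear_sum[OF assms] linear_scale[OF assms])
  finally show ?thesis .
qed

lemma G_nondeg: assumes "\<And>z. G u z = G v z" shows "u = v"
proof -
  have "G (u - v) (u - v) = 0" using assms by (simp add: Glsimps)
  then show ?thesis using Gpos[of "u - v"] by auto
qed

lemma ginv_eq: assumes "i \<in> Basis" "j \<in> Basis" shows "ginv G i j = wv j \<bullet> i"
proof -
  define H where "H i j = (if i \<in> Basis \<and> j \<in> Basis then wv j \<bullet> i else 0)" for i j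
  have P: "(\<forall>i j. (i \<notin> Basis \<or> j \<notin> Basis) \<longrightarrow> h i j = 0) \<and>
      (\<forall>i\<in>Basis. \<forall>k\<in>Basis. (\<Sum>j\<in>Basis. G i j * h j k) = (if i = k then 1 else 0))
     \<longleftrightarrow> h = H" for h
  proof
    assume A: "(\<forall>i j. (i \<notin> Basis \<or> j \<notin> Basis) \<longrightarrow> h i j = 0) \<and>
      (\<forall>i\<in>Basis. \<forall>k\<in>Basis. (\<Sum>j\<in>Basis. G i j * h j k) = (if i = k then 1 else 0))"
    show "h = H"
    proof (intro ext)
      fix i k
      show "h i k = H i k"
      proof (cases "i \<in> Basis \<and> k \<in> Basis")
        case True
        define v where "v = (\<Sum>j\<in>Basis. h j k *\<^sub>R j)"
        have "G v z = G (wv k) z" for z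
        proof -
          have "G v z = (\<Sum>j\<in>Basis. h j k * G j z)" unfolding v_def
            by (simp add: linear_sum[OF linGl] Glsimps)
          also have "\<dots> = (\<Sum>j\<in>Basis. h j k * (\<Sum>b\<in>Basis. (z \<bullet> b) * G j b))"
            by (subst lexp[OF linGr], rule refl)
          also have "\<dots> = (\<Sum>j\<in>Basis. \<Sum>b\<in>Basis. (z \<bullet> b) * (G b j * h j k))"
            unfolding sum_distrib_left by (intro sum.cong refl) (metis Gsym mult.commute mult.left_commute)
          also have "\<dots> = (\<Sum>b\<in>Basis. \<Sum>j\<in>Basis. (z \<bullet> b) * (G b j * h j k))" by (rule sum.swap)
          also have "\<dots> = (\<Sum>b\<in>Basis. (z \<bullet> b) * (\<Sum>j\<in>Basis. G b j * h j k))"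
            by (simp add: sum_distrib_left)
          also have "\<dots> = (\<Sum>b\<in>Basis. (z \<bullet> b) * (if b = k then 1 else 0))"
            using A True by (intro sum.cong) auto
          also have "\<dots> = z \<bullet> k" using True by (simp add: if_distrib cong: if_cong)
          finally show ?thesis by (simp add: wv)
        qed
        then have "v = wv k" by (rule G_nondeg)
        moreover have "v \<bullet> i = h i k" unfolding v_def using True
          by (simp add: inner_sum_left inner_Basis if_distrib cong: if_cong)
        ultimately have "h i k = wv k \<bullet> i" by simp
        then show ?thesis using True H_def by simp
      next
        case False then show ?thesis using A H_def by auto
      qed
    qed
  next
    assume "h = H"
    moreover have "(\<Sum>j\<in>Basis. G i j * H j k) = (if i = k then 1 else 0)" if "i \<in> Basis" "k \<in> Basis" for i k
    proof -
      have "(\<Sum>j\<in>Basis. G i j * H j k) = (\<Sum>j\<in>Basis. (wv k \<bullet> j) * G i j)"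
        using that by (intro sum.cong) (auto simp: H_def)
      also have "\<dots> = G i (wv k)" by (rule lexp[OF linGr, symmetric])
      also have "\<dots> = i \<bullet> k" by (simp add: Gsym[of i] wv)
      finally show ?thesis using that by (simp add: inner_Basis)
    qed
    ultimately show "(\<forall>i j. (i \<notin> Basis \<or> j \<notin> Basis) \<longrightarrow> h i j = 0) \<and>
      (\<forall>i\<in>Basis. \<forall>k\<in>Basis. (\<Sum>j\<in>Basis. G i j * h j k) = (if i = k then 1 else 0))"
      by (auto simp: H_def)
  qed
  have "ginv G = H" unfolding ginv_def P by simp
  then show ?thesis using assms H_def by simp
qed

lemma lee_theta_eq: assumes "\<And>y z. linear (\<lambda>x. A x y z)"
  shows "lee_theta G A z = (\<Sum>j\<in>Basis. A (wv j) j z)"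
proof -
  have "lee_theta G A z = (\<Sum>i\<in>Basis. \<Sum>j\<in>Basis. (wv j \<bullet> i) * A i j z)"
    unfolding lee_theta_def by (intro sum.cong refl) (simp add: ginv_eq)
  also have "\<dots> = (\<Sum>j\<in>Basis. \<Sum>i\<in>Basis. (wv j \<bullet> i) * A i j z)" by (rule sum.swap)
  also have "\<dots> = (\<Sum>j\<in>Basis. A (wv j) j z)"
    by (intro sum.cong refl) (rule lexp[OF assms, symmetric])
  finally show ?thesis .
qed

lemma contr1: assumes "linear l" shows "(\<Sum>j\<in>Basis. G (wv j) a * l j) = l a"
  by (simp add: wv lexp[OF assms, of a])

lemma wv_sum: "(\<Sum>j\<in>Basis. G j a *\<^sub>R wv j) = a"
proof (rule G_nondeg)
  fix z
  have "G (\<Sum>j\<in>Basis. G j a *\<^sub>R wv j) z = (\<Sum>j\<in>Basis. (z \<bullet> j) * G j a)"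
    by (simp add: linear_sum[OF linGl] Glsimps wv mult.commute)
  also have "\<dots> = G z a" by (rule lexp[OF linGl, symmetric])
  finally show "G (\<Sum>j\<in>Basis. G j a *\<^sub>R wv j) z = G a z" by (simp add: Gsym)
qed

lemma contr2: assumes "linear l" shows "(\<Sum>j\<in>Basis. l (wv j) * G j a) = l a"
proof -
  have "l a = l (\<Sum>j\<in>Basis. G j a *\<^sub>R wv j)" by (simp add: wv_sum)
  also have "\<dots> = (\<Sum>j\<in>Basis. l (wv j) * G j a)" by (simp add: linear_sum[OF assms] linear_scale[OF assms] mult.commute)
  finally show ?thesis by simp
qed

lemma trace_wv: "(\<Sum>j\<in>Basis. G (wv j) (u j)) = (\<Sum>j\<in>Basis. u j \<bullet> j)"
  by (simp add: wv)


lemma FS_facts: assumes "F_space f e t A"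
  shows "tri A" "\<And>x y z. A x y z = A x z y"
    "\<And>x y z. A x y z = - A x (f y) (f z) + t y * A x e z + t z * A x y e"
  using assms F_space_tri unfolding F_space_def by blast+

lemma FS_xee: assumes "F_space f e t A" shows "A x e e = 0"
  using FS_facts(3)[OF assms, of x e e] by (simp add: fe te tri_simps[OF FS_facts(1)[OF assms]])

lemma NE10: assumes FS: "F_space f e t A" and C: "F_cond 10 n f e t G A"
  shows "NE f e t A (f a) (f b) z = 0"
proof -
  have C0: "\<forall>x y z. A x y z = - t x * A e (f y) (f z)" using C unfolding F_cond_def by (simp (no_asm_use); blast)
  have "A (f c) v w = 0" for c v w using C0[rule_format, of "f c" v w] by (simp add: tf)
  then show ?thesis unfolding NE_def by simp
qed

lemma NE11: assumes FS: "F_space f e t A" and C: "F_cond 11 n f e t G A"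
  shows "NE f e t A (f a) (f b) z = 0"
proof -
  have C0: "\<forall>x y z. A x y z = t x * (t y * lee_omega e A z + t z * lee_omega e A y)" using C unfolding F_cond_def by (simp (no_asm_use); blast)
  have "A (f c) v w = 0" for c v w using C0[rule_format, of "f c" v w] by (simp add: tf)
  then show ?thesis unfolding NE_def by simp
qed

lemma NE4: assumes FS: "F_space f e t A" and C: "F_cond 4 n f e t G A"
  shows "NE f e t A (f a) (f b) z = 0"
proof -
  define k where "k = lee_theta G A e / (2 * real n)"
  have C': "A x y z = k * (G (f x) (f y) * t z + G (f x) (f z) * t y)" for x y z
    using C unfolding F_cond_def k_def by (simp (no_asm_use); blast)
  show ?thesis unfolding NE_def C' by (simp add: tf fe te ff lsimps Gff algebra_simps Gsym[of a "f b"] Gsym[of "f a" b])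
qed

lemma NE5: assumes FS: "F_space f e t A" and C: "F_cond 5 n f e t G A"
  shows "NE f e t A (f a) (f b) z = 0"
proof -
  define k where "k = lee_theta_star f G A e / (2 * real n)"
  have C': "A x y z = k * (G x (f y) * t z + G x (f z) * t y)" for x y z
    using C unfolding F_cond_def k_def by (simp (no_asm_use); blast)
  show ?thesis unfolding NE_def C' by (simp add: tf fe te ff lsimps Gff algebra_simps Gsym[of a "f b"] Gsym[of "f a" b] Gsym[of a b])
qed

lemma NE_B: assumes B: "\<And>x y z. A x y z = B x y * t z + B x z * t y" and "a' = f a" "b' = f b"
  shows "NE f e t A a' b' z = (B (f a') b' + B a' (f b') - B (f b') a' - B b' (f a')) * t z"
  unfolding NE_def B using assms(2,3) by (simp add: tf te algebra_simps)

lemma NE6: assumes FS: "F_space f e t A" and C: "F_cond 6 n f e t G A"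
  shows "NE f e t A (f a) (f b) z = 0"
proof -
  define B where "B = (\<lambda>x y. A x y e)"
  have C0: "\<forall>x y z. A x y z = A x y e * t z + A x z e * t y \<and> A x y e = A y x e"
    using C unfolding F_cond_def by (simp (no_asm_use); blast)
  have C': "A x y z = B x y * t z + B x z * t y" "B x y = B y x" for x y z
    unfolding B_def using C0 by blast+
  show ?thesis using NE_B[of A B "f a" a "f b" b z, OF C'(1)] C'(2)[of "f (f a)" "f b"] C'(2)[of "f a" "f (f b)"] by simp
qed

lemma NE8: assumes FS: "F_space f e t A" and C: "F_cond 8 n f e t G A"
  shows "NE f e t A (f a) (f b) z = 0"
proof -
  define B where "B = (\<lambda>x y. A x y e)"
  have C0: "\<forall>x y z. A x y z = A x y e * t z + A x z e * t y \<and> A x y e = A y x e"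
    using C unfolding F_cond_def by (simp (no_asm_use); blast)
  have C': "A x y z = B x y * t z + B x z * t y" "B x y = B y x" for x y z
    unfolding B_def using C0 by blast+
  show ?thesis using NE_B[of A B "f a" a "f b" b z, OF C'(1)] C'(2)[of "f (f a)" "f b"] C'(2)[of "f a" "f (f b)"] by simp
qed

lemma NE9: assumes FS: "F_space f e t A" and C: "F_cond 9 n f e t G A"
  shows "NE f e t A (f a) (f b) z = 0"
proof -
  note tA = FS_facts(1)[OF FS]
  define B where "B = (\<lambda>x y. A x y e)"
  have C0: "\<forall>x y z. A x y z = A x y e * t z + A x z e * t y \<and> A x y e = - A y x e \<and> A x y e = - A (f x) (f y) e"
    using C unfolding F_cond_def by (simp (no_asm_use); blast)
  have C': "A x y z = B x y * t z + B x z * t y" "B x y = - B y x" "B x y = - B (f x) (f y)" for x y z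
    unfolding B_def using C0 by blast+
  have Be: "B e y = 0" for y using C'(3)[of e y] by (simp add: fe B_def tri_simps[OF tA])
  have Bff: "B (f (f x)) y = B x y" for x y by (simp add: ff B_def tri_simps[OF tA] Be[unfolded B_def])
  have h1: "B (f (f a)) (f b) + B (f a) (f (f b)) = 0"
    using C'(3)[of a "f b"] by (simp add: Bff)
  have h2: "B (f (f b)) (f a) + B (f b) (f (f a)) = 0"
    using C'(3)[of b "f a"] by (simp add: Bff)
  show ?thesis using NE_B[of A B "f a" a "f b" b z, OF C'(1)] h1 h2 by simp
qed

lemma NE1: assumes FS: "F_space f e t A" and C: "F_cond 1 n f e t G A"
  shows "NE f e t A (f a) (f b) z = 0"
proof -
  note tA = FS_facts(1)[OF FS]
  define th where "th = lee_theta G A"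
  have lth: "linear th" unfolding th_def lee_theta_def
    by (rule linearI) (simp_all add: tri_simps[OF tA] sum.distrib sum_distrib_left algebra_simps)
  have C': "A x y z = 1 / (2 * real n) *
        (G (f x) (f y) * th (f (f z)) + G (f x) (f z) * th (f (f y))
         - G x (f y) * th (f z) - G x (f z) * th (f y))" for x y z
    using C unfolding F_cond_def th_def by simp
  have sG: "G b (f a) = G a (f b)" by (metis Gsym Gf)
  show ?thesis unfolding NE_def C'
    by (simp add: tf fe te ff lsimps Gff Gf linear_add[OF lth] linear_diff[OF lth] linear_scale[OF lth] linear_0[OF lth] sG Gsym[of b a] algebra_simps)
qed

lemma NE2: assumes FS: "F_space f e t A" and C: "F_cond 2 n f e t G A"
  shows "NE f e t A (f a) (f b) z = 0"
proof -
  note tA = FS_facts(1)[OF FS]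
  have k1: "A e y z = 0" and k2: "A x e z = 0" and cyc: "A x y (f z) + A y z (f x) + A z x (f y) = 0" for x y z
    using C unfolding F_cond_def by simp_all
  have k3: "A x y e = 0" for x y using k2[of x y] FS_facts(2)[OF FS, of x y e] by simp
  have Aphi: "A x (f y) (f z) = - A x y z" for x y z
    using FS_facts(3)[OF FS, of x y z] k2 k3 by simp
  have hz: "\<forall>x y z. A x (f y) z - A (f x) (f y) (f z) - A y (f x) z + A (f y) (f x) (f z) = 0"
    using horiz[OF tA k1 k2 FS_facts(2)[OF FS] Aphi] cyc by blast
  have ff1: "A (f (f x)) y z = A x y z" and ff2: "A x (f (f y)) z = A x y z" for x y z
    by (simp_all add: ff tri_simps[OF tA] k1 k2 k3)
  show ?thesis unfolding NE_def using hz by (simp add: ff1 ff2 k3)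
qed


lemma ffff[simp]: "f (f (f (f x))) = f (f x)" by simp

lemma t_exp: "(\<Sum>j\<in>Basis. t j * (e \<bullet> j)) = 1"
  using lexp[OF lt, of e] te by (simp add: mult.commute)

lemma trace_ff: "(\<Sum>j\<in>Basis. f (f j) \<bullet> j) = 2 * real n"
proof -
  have "(\<Sum>j\<in>Basis. f (f j) \<bullet> j) = (\<Sum>j\<in>Basis. 1 - t j * (e \<bullet> j))"
    by (intro sum.cong refl) (simp add: ff inner_diff_left)
  also have "\<dots> = real DIM('a) - 1" by (simp add: sum_subtractf t_exp)
  finally show ?thesis using dim by simp
qed

lemma dim1_f0: assumes "n = 0" shows "f x = 0"
proof -
  have "card (Basis::'a set) = 1" using dim assms by simp
  then obtain b where B: "(Basis::'a set) = {b}" by (rule card_1_singletonE)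
  have rep: "y = (y \<bullet> b) *\<^sub>R b" for y :: 'a
  proof -
    have "(\<Sum>b'\<in>Basis. (y \<bullet> b') *\<^sub>R b') = (y \<bullet> b) *\<^sub>R b" unfolding B by simp
    then show ?thesis using euclidean_representation[of y] by simp
  qed
  have "f b \<bullet> b = 0" using trf unfolding B by simp
  then have "f b = 0" using rep[of "f b"] by simp
  then show ?thesis using rep[of x] by (metis fsimps(3) scaleR_zero_right)
qed


lemma FS_Aof: assumes l1: "\<And>y. linear (\<lambda>x. S x y)" and l2: "\<And>x. linear (S x)" and Se: "\<And>x. S x e = 0"
  shows "F_space f e t (Aof S t)"
proof -
  have "tri (Aof S t)" unfolding tri_def Aof_def
    by (intro conjI allI; rule linearI)
      (simp_all add: linear_add[OF l1] linear_scale[OF l1] linear_add[OF l2] linear_scale[OF l2] tsimps algebra_simps)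
  moreover have "Aof S t x y z = - Aof S t x (f y) (f z) + t y * Aof S t x e z + t z * Aof S t x y e" for x y z
    unfolding Aof_def by (simp add: tf te Se algebra_simps)
  moreover have "Aof S t x y z = Aof S t x z y" for x y z unfolding Aof_def by simp
  ultimately show ?thesis unfolding F_space_def tri_def by blast
qed

lemma Aof_e: assumes "\<And>x. S x e = 0" shows "Aof S t x y e = S x y"
  unfolding Aof_def using assms by (simp add: te)

lemma Fc_iff:
  "F_cond 6 n f e t G A \<longleftrightarrow> (\<forall>x y z. A x y z = A x y e * t z + A x z e * t y \<and> A x y e = A y x e \<and> A x y e = A (f x) (f y) e)"
  "F_cond 8 n f e t G A \<longleftrightarrow> (\<forall>x y z. A x y z = A x y e * t z + A x z e * t y \<and> A x y e = A y x e \<and> A x y e = - A (f x) (f y) e)"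
  "F_cond 9 n f e t G A \<longleftrightarrow> (\<forall>x y z. A x y z = A x y e * t z + A x z e * t y \<and> A x y e = - A y x e \<and> A x y e = - A (f x) (f y) e)"
  by (simp_all add: F_cond_def)

lemma Fc_Aof:
  assumes Se: "\<And>x. S x e = 0"
  shows "(\<And>x y. S x y = S y x) \<Longrightarrow> (\<And>x y. S x y = S (f x) (f y)) \<Longrightarrow> F_cond 6 n f e t G (Aof S t)"
    "(\<And>x y. S x y = S y x) \<Longrightarrow> (\<And>x y. S x y = - S (f x) (f y)) \<Longrightarrow> F_cond 8 n f e t G (Aof S t)"
    "(\<And>x y. S x y = - S y x) \<Longrightarrow> (\<And>x y. S x y = - S (f x) (f y)) \<Longrightarrow> F_cond 9 n f e t G (Aof S t)"
proof -
  have ae: "Aof S t x y e = S x y" for x y using Aof_e[of S] Se by blast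
  have a: "Aof S t x y z = Aof S t x y e * t z + Aof S t x z e * t y" for x y z
    unfolding ae by (simp add: Aof_def)
  show "(\<And>x y. S x y = S y x) \<Longrightarrow> (\<And>x y. S x y = S (f x) (f y)) \<Longrightarrow> F_cond 6 n f e t G (Aof S t)"
    unfolding Fc_iff ae using a unfolding ae by blast
  show "(\<And>x y. S x y = S y x) \<Longrightarrow> (\<And>x y. S x y = - S (f x) (f y)) \<Longrightarrow> F_cond 8 n f e t G (Aof S t)"
    unfolding Fc_iff ae using a unfolding ae by blast
  show "(\<And>x y. S x y = - S y x) \<Longrightarrow> (\<And>x y. S x y = - S (f x) (f y)) \<Longrightarrow> F_cond 9 n f e t G (Aof S t)"
    unfolding Fc_iff ae using a unfolding ae by blast
qed

context fixes T :: "'a \<Rightarrow> 'a \<Rightarrow> 'a \<Rightarrow> real"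
  assumes FS: "F_space f e t T" and NC: "\<And>a b z. NE f e t T (f a) (f b) z = 0"
begin

lemma tT: "tri T" using FS_facts(1)[OF FS] .
lemmas Tl = tri_simps[OF tT]
lemma Tsym: "T x y z = T x z y" using FS_facts(2)[OF FS] by blast
lemma Tphi: "T x y z = - T x (f y) (f z) + t y * T x e z + t z * T x y e" using FS_facts(3)[OF FS] by blast
lemma Txee: "T x e e = 0" using FS_xee[OF FS] .

definition H where "H x y z = T (f (f x)) (f (f y)) (f (f z))"
definition th0 where "th0 z = (\<Sum>j\<in>Basis. H (wv j) j z)"

lemma tH: "tri H" unfolding tri_def H_def
  by (intro conjI allI; rule linearI) (simp_all add: fsimps Tl)
lemmas Hl = tri_simps[OF tH]

lemma Hk1: "H e y z = 0" and Hk2: "H x e z = 0" and Hk3: "H x y e = 0"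
  unfolding H_def by (simp_all add: fe Tl fsimps)
lemma Hsym: "H x y z = H x z y" unfolding H_def by (rule Tsym)
lemma Hphi: "H x (f y) (f z) = - H x y z"
  unfolding H_def using Tphi[of "f (f x)" "f y" "f z"] by (simp add: tf)

lemma lth0: "linear th0" unfolding th0_def
  by (rule linearI) (simp_all add: Hl sum.distrib sum_distrib_left)
lemmas th0l = linear_add[OF lth0] linear_diff[OF lth0] linear_scale[OF lth0] linear_0[OF lth0] linear_neg[OF lth0]

lemma th0_ff: "th0 (f (f z)) = th0 z" unfolding th0_def H_def by simp

lemma th0_eq: "lee_theta G H z = th0 z"
  unfolding th0_def by (rule lee_theta_eq) (rule tri_lin(1)[OF tH])

lemma n0_th0: "n = 0 \<Longrightarrow> th0 z = 0"
  unfolding th0_def H_def using dim1_f0 by (simp add: Tl)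


definition A1 where "A1 x y z = 1 / (2 * real n) * (G (f x) (f y) * th0 (f (f z)) + G (f x) (f z) * th0 (f (f y))
   - G x (f y) * th0 (f z) - G x (f z) * th0 (f y))"

lemma tA1: "tri A1" unfolding tri_def A1_def
  by (intro conjI allI; rule linearI) (simp_all add: lsimps th0l algebra_simps)
lemma A1sym: "A1 x y z = A1 x z y" unfolding A1_def by (simp add: algebra_simps)
lemma A1k1: "A1 e y z = 0" and A1k2: "A1 x e z = 0" and A1k3: "A1 x y e = 0"
  unfolding A1_def by (simp_all add: fe lsimps th0l tf)
lemma A1phi: "A1 x (f y) (f z) = - A1 x y z"
  unfolding A1_def by (simp add: Gf ff lsimps th0l tf fe algebra_simps)

lemma FS_A1: "F_space f e t A1"
  unfolding F_space_def using tA1 A1sym A1phi A1k2 A1k3 unfolding tri_def by simp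

lemma FS_H: "F_space f e t H"
  unfolding F_space_def using tH Hsym Hphi Hk2 Hk3 unfolding tri_def by simp

lemma theta_A1: "lee_theta G A1 w = 1 / (2 * real n) * (2 * real n) * th0 (f (f w))"
proof -
  have l1: "linear (\<lambda>x. th0 (f (f x)))" by (intro linear_compose[OF lf, unfolded o_def] linear_compose[OF lf lth0, unfolded o_def])
  have l2: "linear (\<lambda>x. th0 (f x))" by (intro linear_compose[OF lf lth0, unfolded o_def])
  have p1: "(\<Sum>j\<in>Basis. G (f (wv j)) (f j)) = 2 * real n"
    using trace_ff by (simp add: Gf trace_wv)
  have p2: "(\<Sum>j\<in>Basis. G (f (wv j)) (f w) * th0 (f (f j))) = th0 (f (f w))"
    using contr1[OF l1, of "f (f w)"] by (simp add: Gf)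
  have p3: "(\<Sum>j\<in>Basis. G (wv j) (f j)) = 0"
    using trf by (simp add: trace_wv)
  have p4: "(\<Sum>j\<in>Basis. G (wv j) (f w) * th0 (f j)) = th0 (f (f w))"
    using contr1[OF l2, of "f w"] by simp
  have "lee_theta G A1 w = (\<Sum>j\<in>Basis. A1 (wv j) j w)"
    by (rule lee_theta_eq) (rule tri_lin(1)[OF tA1])
  also have "\<dots> = 1 / (2 * real n) * ((\<Sum>j\<in>Basis. G (f (wv j)) (f j)) * th0 (f (f w))
      + (\<Sum>j\<in>Basis. G (f (wv j)) (f w) * th0 (f (f j)))
      - (\<Sum>j\<in>Basis. G (wv j) (f j)) * th0 (f w) - (\<Sum>j\<in>Basis. G (wv j) (f w) * th0 (f j)))"
    unfolding A1_def by (simp add: sum_distrib_left sum_distrib_right sum.distrib sum_subtractf algebra_simps)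
  also have "\<dots> = 1 / (2 * real n) * (2 * real n) * th0 (f (f w))"
    unfolding p1 p2 p3 p4 by simp
  finally show ?thesis .
qed

lemma Fc1_A1: "F_cond 1 n f e t G A1"
proof (cases "n = 0")
  case True
  then show ?thesis unfolding F_cond_def A1_def by simp
next
  case False
  then have th: "lee_theta G A1 w = th0 (f (f w))" for w using theta_A1 by simp
  show ?thesis unfolding F_cond_def by (simp add: th A1_def)
qed

definition A2 where "A2 x y z = H x y z - A1 x y z"

lemma FS_A2: "F_space f e t A2"
  unfolding A2_def[abs_def] by (rule FS_diff[OF FS_H FS_A1])

lemma cycH: "H x y (f z) + H y z (f x) + H z x (f y) = 0"
proof -
  have "\<forall>x y z. H x (f y) z - H (f x) (f y) (f z) - H y (f x) z + H (f y) (f x) (f z) = 0"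
  proof (intro allI)
    fix x y z
    have "NE f e t T (f x) (f y) (f (f z)) = 0" by (rule NC)
    then show "H x (f y) z - H (f x) (f y) (f z) - H y (f x) z + H (f y) (f x) (f z) = 0"
      unfolding NE_def H_def by (simp add: tf)
  qed
  then show ?thesis using horiz[OF tH Hk1 Hk2 Hsym Hphi] by blast
qed

lemma cycA1: "A1 x y (f z) + A1 y z (f x) + A1 z x (f y) = 0"
proof -
  have s: "G y x = G x y" "G z x = G x z" "G z y = G y z"
     "G y (f x) = G x (f y)" "G z (f x) = G x (f z)" "G z (f y) = G y (f z)"
    by (simp_all add: Gsym) (metis Gsym Gf)+
  show ?thesis unfolding A1_def by (simp add: Gf ff lsimps th0l tf fe s algebra_simps)
qed

lemma Fc2_A2: "F_cond 2 n f e t G A2"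
proof -
  have th: "lee_theta G A2 z = 0" for z
  proof -
    have "lee_theta G A2 z = lee_theta G H z - lee_theta G A1 z"
      unfolding lee_theta_def A2_def by (simp add: sum_subtractf algebra_simps)
    also have "\<dots> = th0 z - 1 / (2 * real n) * (2 * real n) * th0 z"
      by (simp add: th0_eq theta_A1 th0_ff)
    also have "\<dots> = 0" using n0_th0 by (cases "n = 0") auto
    finally show ?thesis .
  qed
  have c: "A2 x y (f z) + A2 y z (f x) + A2 z x (f y) = 0" for x y z
    using cycH[of x y z] cycA1[of x y z] unfolding A2_def by simp
  show ?thesis unfolding F_cond_def using th c
    by (simp add: A2_def Hk1 Hk2 A1k1 A1k2)
qed


definition Bf where "Bf x y = T (f (f x)) (f (f y)) e"

lemma Bl1: "linear (\<lambda>x. Bf x y)" and Bl2: "linear (Bf x)"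
  unfolding Bf_def by (rule linearI; simp add: Tl fsimps)+
lemmas Bsimps = linear_add[OF Bl1] linear_diff[OF Bl1] linear_scale[OF Bl1] linear_0[OF Bl1]
   linear_add[OF Bl2] linear_diff[OF Bl2] linear_scale[OF Bl2] linear_0[OF Bl2]

lemma Bxe: "Bf x e = 0" and Bex: "Bf e x = 0" unfolding Bf_def by (simp_all add: fe fsimps Tl)
lemma Bff1: "Bf (f (f x)) y = Bf x y" and Bff2: "Bf x (f (f y)) = Bf x y" unfolding Bf_def by simp_all

lemma B7: "Bf x y - Bf y x + Bf (f x) (f y) - Bf (f y) (f x) = 0"
proof -
  have "NE f e t T (f x) (f (f y)) e = 0" by (rule NC)
  then show ?thesis unfolding NE_def Bf_def by (simp add: fe te Tl fsimps)
qed

definition S6 where "S6 x y = (Bf x y + Bf y x + Bf (f x) (f y) + Bf (f y) (f x)) / 4"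
definition S8 where "S8 x y = (Bf x y + Bf y x - Bf (f x) (f y) - Bf (f y) (f x)) / 4"
definition S9 where "S9 x y = (Bf x y - Bf y x - Bf (f x) (f y) + Bf (f y) (f x)) / 4"

lemma S_lin: "linear (\<lambda>x. S6 x y)" "linear (S6 x)" "linear (\<lambda>x. S8 x y)" "linear (S8 x)"
  "linear (\<lambda>x. S9 x y)" "linear (S9 x)"
  unfolding S6_def S8_def S9_def by (rule linearI; simp add: Bsimps fsimps field_simps)+

lemma S_e: "S6 x e = 0" "S8 x e = 0" "S9 x e = 0"
  unfolding S6_def S8_def S9_def by (simp_all add: Bxe Bex fe Bsimps)

lemma FS_S: "F_space f e t (Aof S6 t)" "F_space f e t (Aof S8 t)" "F_space f e t (Aof S9 t)"
  using FS_Aof[of S6, OF S_lin(1,2) S_e(1)] FS_Aof[of S8, OF S_lin(3,4) S_e(2)] FS_Aof[of S9, OF S_lin(5,6) S_e(3)] by auto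

lemma Fc_S: "F_cond 6 n f e t G (Aof S6 t)" "F_cond 8 n f e t G (Aof S8 t)" "F_cond 9 n f e t G (Aof S9 t)"
proof -
  show "F_cond 6 n f e t G (Aof S6 t)"
    by (rule Fc_Aof(1)[of S6, OF S_e(1)]) (simp_all add: S6_def Bff1 Bff2 algebra_simps)
  show "F_cond 8 n f e t G (Aof S8 t)"
    by (rule Fc_Aof(2)[of S8, OF S_e(2)]) (simp_all add: S8_def Bff1 Bff2 field_simps)
  show "F_cond 9 n f e t G (Aof S9 t)"
    by (rule Fc_Aof(3)[of S9, OF S_e(3)]) (simp_all add: S9_def Bff1 Bff2 field_simps)
qed

definition A10 where "A10 x y z = - t x * T e (f y) (f z)"
definition A11 where "A11 x y z = t x * (t y * T e e z + t z * T e e y)"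

lemma FS_A10: "F_space f e t A10"
proof -
  have "tri A10" unfolding tri_def A10_def
    by (intro conjI allI; rule linearI) (simp_all add: Tl fsimps tsimps algebra_simps)
  moreover have "A10 x y z = A10 x z y" for x y z unfolding A10_def using Tsym by simp
  moreover have "A10 x y z = - A10 x (f y) (f z) + t y * A10 x e z + t z * A10 x y e" for x y z
    unfolding A10_def using Tphi[of e "f y" "f z"] by (simp add: fe Tl tf)
  ultimately show ?thesis unfolding F_space_def tri_def by blast
qed

lemma Fc_A10: "F_cond 10 n f e t G A10"
proof -
  have "T e (f (f y)) (f (f z)) = - T e (f y) (f z)" for y z using Tphi[of e "f y" "f z"] by (simp add: tf)
  then show ?thesis unfolding F_cond_def A10_def by (simp add: te)
qed

lemma FS_A11: "F_space f e t A11"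
proof -
  have "tri A11" unfolding tri_def A11_def
    by (intro conjI allI; rule linearI) (simp_all add: Tl fsimps tsimps algebra_simps)
  moreover have "A11 x y z = A11 x z y" for x y z unfolding A11_def by (simp add: algebra_simps)
  moreover have "A11 x y z = - A11 x (f y) (f z) + t y * A11 x e z + t z * A11 x y e" for x y z
    unfolding A11_def by (simp add: te tf Txee algebra_simps)
  ultimately show ?thesis unfolding F_space_def tri_def by blast
qed

lemma Fc_A11: "F_cond 11 n f e t G A11"
  unfolding F_cond_def A11_def lee_omega_def by (simp add: te Txee)

lemma FS_0: "F_space f e t (\<lambda>x y z. 0)" unfolding F_space_def by (simp add: linear_zero)
lemma Fc_0: "F_cond 4 n f e t G (\<lambda>x y z. 0)" "F_cond 5 n f e t G (\<lambda>x y z. 0)"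
  unfolding F_cond_def lee_theta_def lee_theta_star_def by simp_all

lemma T_decomp: "T x y z = H x y z + (Bf x y * t z + Bf x z * t y) + A10 x y z + A11 x y z"
proof -
  have "T x y z = T (f (f x) + t x *\<^sub>R e) y z" by (simp add: ff)
  also have "\<dots> = T (f (f x)) y z + t x * T e y z" by (simp only: Tl)
  also have "T (f (f x)) y z = T (f (f x)) (f (f y) + t y *\<^sub>R e) (f (f z) + t z *\<^sub>R e)" by (simp add: ff)
  also have "\<dots> = T (f (f x)) (f (f y)) (f (f z)) + t z * T (f (f x)) (f (f y)) e
      + t y * T (f (f x)) e (f (f z)) + t y * t z * T (f (f x)) e e" by (simp add: Tl algebra_simps)
  also have "T e y z = - T e (f y) (f z) + t y * T e e z + t z * T e e y"
    using Tphi[of e y z] Tsym[of e y e] by simp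
  finally show ?thesis unfolding H_def Bf_def A10_def A11_def using Txee Tsym[of "f (f x)" e "f (f z)"]
    by (simp add: algebra_simps)
qed

lemma bwd: "in_class_sum U1_classes n f e t G T"
proof -
  define Af where "Af i = (if i = 1 then A1 else if i = 2 then A2 else if i = 6 then Aof S6 t
     else if i = 8 then Aof S8 t else if i = 9 then Aof S9 t else if i = 10 then A10
     else if i = 11 then A11 else (\<lambda>x y z. 0))" for i :: nat
  have P1: "\<forall>i\<in>U1_classes. F_space f e t (Af i) \<and> F_cond i n f e t G (Af i)"
    unfolding U1_classes_def Af_def
    using FS_A1 Fc1_A1 FS_A2 Fc2_A2 FS_S Fc_S FS_A10 Fc_A10 FS_A11 Fc_A11 FS_0 Fc_0 by simp
  have P2: "T x y z = (\<Sum>i\<in>U1_classes. Af i x y z)" for x y z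
  proof -
    have s: "S6 u v + S8 u v + S9 u v = Bf u v" for u v
      using B7[of u v] unfolding S6_def S8_def S9_def by (simp add: field_simps)
    have sA: "Aof S6 t x y z + Aof S8 t x y z + Aof S9 t x y z = (S6 x y + S8 x y + S9 x y) * t z + (S6 x z + S8 x z + S9 x z) * t y"
      unfolding Aof_def by (simp add: algebra_simps)
    have "(\<Sum>i\<in>U1_classes. Af i x y z) = A1 x y z + A2 x y z + Aof S6 t x y z + Aof S8 t x y z
       + Aof S9 t x y z + A10 x y z + A11 x y z"
      unfolding U1_classes_def Af_def by simp
    also have "\<dots> = T x y z"
      using T_decomp[of x y z] sA unfolding s A2_def by simp
    finally show ?thesis by simp
  qed
  show ?thesis unfolding in_class_sum_def
    by (rule exI[of _ Af], rule conjI[OF P1], intro allI, rule P2)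
qed

end


lemma fwd: assumes "in_class_sum U1_classes n f e t G T" shows "NE f e t T (f a) (f b) z = 0"
proof -
  obtain A where A: "\<forall>i\<in>U1_classes. F_space f e t (A i) \<and> F_cond i n f e t G (A i)"
    and S: "\<forall>x y z. T x y z = (\<Sum>i\<in>U1_classes. A i x y z)"
    using assms unfolding in_class_sum_def by blast
  have "NE f e t T (f a) (f b) z = (\<Sum>i\<in>U1_classes. NE f e t (A i) (f a) (f b) z)"
    unfolding NE_def using S by (simp add: sum.distrib sum_subtractf sum_distrib_right)
  also have "\<dots> = 0"
  proof (rule sum.neutral, rule ballI)
    fix i assume i: "i \<in> U1_classes"
    then have FS: "F_space f e t (A i)" and C: "F_cond i n f e t G (A i)" using A by auto
    from i have "i = 1 \<or> i = 2 \<or> i = 4 \<or> i = 5 \<or> i = 6 \<or> i = 8 \<or> i = 9 \<or> i = 10 \<or> i = 11"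
      unfolding U1_classes_def by auto
    then show "NE f e t (A i) (f a) (f b) z = 0"
      using NE1[OF FS] NE2[OF FS] NE4[OF FS] NE5[OF FS] NE6[OF FS] NE8[OF FS] NE9[OF FS] NE10[OF FS] NE11[OF FS] C
      by auto
  qed
  finally show ?thesis .
qed

lemma alg_main: assumes FS: "F_space f e t T"
  shows "in_class_sum U1_classes n f e t G T \<longleftrightarrow> (\<forall>a b z. NE f e t T (f a) (f b) z = 0)"
  using fwd bwd[OF FS] by blast

end

locale pder = pis n f e t G for n f e t and G :: "'a::euclidean_space \<Rightarrow> 'a \<Rightarrow> real" +
  fixes Dp :: "'a \<Rightarrow> 'a \<Rightarrow> 'a" and Dx :: "'a \<Rightarrow> 'a" and De :: "'a \<Rightarrow> 'a \<Rightarrow> real"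
    and Dg :: "'a \<Rightarrow> 'a \<Rightarrow> 'a \<Rightarrow> real"
  assumes Dp1: "\<And>y. linear (\<lambda>h. Dp h y)" and Dp2: "\<And>h. linear (Dp h)"
    and Dgt: "tri Dg" and Dg_sym: "\<And>h y z. Dg h y z = Dg h z y"
    and R1: "\<And>h y z. Dg h (f y) z + G (Dp h y) z = Dg h y (f z) + G y (Dp h z)"
    and R2: "\<And>h y. Dp h (f y) + f (Dp h y) = - (De h y *\<^sub>R e + t y *\<^sub>R Dx h)"
    and R5: "\<And>h. Dp h e + f (Dx h) = 0"
    and R8: "\<And>h. Dg h e e + 2 * G (Dx h) e = 0"
begin

definition K where "K h y z = 1/2 * (Dg h y z + Dg y h z - Dg z h y)"
definition FF where "FF x y z = G (Dp x y) z + K x (f y) z - K x y (f z)"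

lemmas Dgl = tri_simps[OF Dgt]
lemmas Dps = linear_add[OF Dp1] linear_diff[OF Dp1] linear_scale[OF Dp1] linear_0[OF Dp1] linear_neg[OF Dp1]
  linear_add[OF Dp2] linear_diff[OF Dp2] linear_scale[OF Dp2] linear_0[OF Dp2] linear_neg[OF Dp2]

lemma tK: "tri K" unfolding tri_def K_def
  by (intro conjI allI; rule linearI) (simp_all add: Dgl algebra_simps)
lemmas Kl = tri_simps[OF tK]

lemma tFF: "tri FF" unfolding tri_def FF_def
  by (intro conjI allI; rule linearI) (simp_all add: Kl Dps lsimps algebra_simps)

lemma FF_sym: "FF x y z = FF x z y"
proof -
  have "G (Dp x y) z - G (Dp x z) y = Dg x y (f z) - Dg x (f y) z"
    using R1[of x y z] by (simp add: Gsym[of y])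
  then show ?thesis unfolding FF_def K_def using Dg_sym by (simp add: algebra_simps)
qed

lemma FF_phi: "FF x y z = - FF x (f y) (f z) + t y * FF x e z + t z * FF x y e"
proof -
  have a: "Dp x (f y) = - (De x y *\<^sub>R e + t y *\<^sub>R Dx x) - f (Dp x y)" using R2[of x y] by (simp add: eq_diff_eq)
  have b: "Dp x e = - f (Dx x)" using R5[of x] by (simp add: eq_neg_iff_add_eq_0)
  show ?thesis unfolding FF_def a b
    by (simp add: lsimps Kl Gf ff fe te tf algebra_simps)
qed

lemma FS_FF: "F_space f e t FF"
  unfolding F_space_def using tFF FF_sym FF_phi unfolding tri_def by blast

lemma ne_FF: "De x y - K x y e = - FF x (f y) e"
proof -
  have a: "Dp x (f y) = - (De x y *\<^sub>R e + t y *\<^sub>R Dx x) - f (Dp x y)" using R2[of x y] by (simp add: eq_diff_eq)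
  have k: "K x e e = 1/2 * Dg x e e" unfolding K_def by simp
  have r8: "Dg x e e = - 2 * G (Dx x) e" using R8[of x] by simp
  show ?thesis unfolding FF_def a
    by (simp add: lsimps Kl Gf ff fe te tf k r8 Gsym[of e] algebra_simps)
qed

end

lemma smooth_diff: assumes "smooth_on U h" "open U" "p \<in> U" shows "h differentiable (at p)"
proof -
  from assms(1) have "h differentiable_on U" by (cases rule: smooth_on.cases) auto
  then show ?thesis using assms differentiable_on_eq_differentiable_at by blast
qed

lemma vec_diff: fixes v :: "'a::real_normed_vector \<Rightarrow> 'b::euclidean_space"
  assumes "\<And>c. c \<in> Basis \<Longrightarrow> (\<lambda>q. v q \<bullet> c) differentiable (at p)" shows "v differentiable (at p)"
proof -
  have "v = (\<lambda>q. \<Sum>c\<in>Basis. (v q \<bullet> c) *\<^sub>R c)" by (simp add: euclidean_representation)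
  moreover have "(\<lambda>q. \<Sum>c\<in>Basis. (v q \<bullet> c) *\<^sub>R c) differentiable (at p)"
    using assms by (intro differentiable_sum differentiable_scaleR) auto
  ultimately show ?thesis by simp
qed

lemma lin_exp: fixes l :: "'a::euclidean_space \<Rightarrow> 'b::real_vector"
  assumes "linear l" shows "l w = (\<Sum>b\<in>Basis. (w \<bullet> b) *\<^sub>R l b)"
proof -
  have "l w = l (\<Sum>b\<in>Basis. (w \<bullet> b) *\<^sub>R b)" by (simp add: euclidean_representation)
  also have "\<dots> = (\<Sum>b\<in>Basis. (w \<bullet> b) *\<^sub>R l b)" by (simp add: linear_sum[OF assms] linear_scale[OF assms])
  finally show ?thesis .
qed

lemma fam_deriv:
  fixes L :: "'a::euclidean_space \<Rightarrow> 'a \<Rightarrow> 'b::real_normed_vector" and u :: "'a \<Rightarrow> 'a"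
  assumes U: "open U" "p \<in> U" and lin: "\<And>q. q \<in> U \<Longrightarrow> linear (L q)"
    and dL: "\<And>b. b \<in> Basis \<Longrightarrow> (\<lambda>q. L q b) differentiable (at p)"
    and du: "(u has_derivative u') (at p)"
  shows "((\<lambda>q. L q (u q)) has_derivative
    (\<lambda>h. L p (u' h) + (\<Sum>b\<in>Basis. (u p \<bullet> b) *\<^sub>R frechet_derivative (\<lambda>q. L q b) (at p) h))) (at p)"
proof -
  have d: "((\<lambda>q. \<Sum>b\<in>Basis. (u q \<bullet> b) *\<^sub>R L q b) has_derivative
     (\<lambda>h. \<Sum>b\<in>Basis. (u p \<bullet> b) *\<^sub>R frechet_derivative (\<lambda>q. L q b) (at p) h + (u' h \<bullet> b) *\<^sub>R L p b)) (at p)"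
    by (intro has_derivative_sum has_derivative_scaleR bounded_linear.has_derivative[OF bounded_linear_inner_left] du
        frechet_derivative_works[THEN iffD1, OF dL])
  have e: "(\<lambda>h. \<Sum>b\<in>Basis. (u p \<bullet> b) *\<^sub>R frechet_derivative (\<lambda>q. L q b) (at p) h + (u' h \<bullet> b) *\<^sub>R L p b)
     = (\<lambda>h. L p (u' h) + (\<Sum>b\<in>Basis. (u p \<bullet> b) *\<^sub>R frechet_derivative (\<lambda>q. L q b) (at p) h))"
    by (rule ext) (simp add: sum.distrib lin_exp[OF lin[OF U(2)], of "u' _"])
  show ?thesis
    by (rule has_derivative_transform_within_open[OF has_derivative_eq_rhs[OF d e] U])
      (simp add: lin_exp[OF lin] del: euclidean_representation)
qed

lemma fam2_deriv:
  fixes B :: "'a::euclidean_space \<Rightarrow> 'a \<Rightarrow> 'a \<Rightarrow> real" and u v :: "'a \<Rightarrow> 'a"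
  assumes U: "open U" "p \<in> U" and bil: "\<And>q. q \<in> U \<Longrightarrow> bilinear (B q)"
    and dB: "\<And>b c. b \<in> Basis \<Longrightarrow> c \<in> Basis \<Longrightarrow> (\<lambda>q. B q b c) differentiable (at p)"
    and du: "(u has_derivative u') (at p)" and dv: "(v has_derivative v') (at p)"
  shows "((\<lambda>q. B q (u q) (v q)) has_derivative
    (\<lambda>h. B p (u' h) (v p) + B p (u p) (v' h) + (\<Sum>b\<in>Basis. \<Sum>c\<in>Basis. (u p \<bullet> b) * (v p \<bullet> c) * frechet_derivative (\<lambda>q. B q b c) (at p) h))) (at p)"
proof -
  have l1: "linear (B q w)" and l2: "linear (\<lambda>w. B q w z)" if "q \<in> U" for q w z
    using bil[OF that] unfolding bilinear_def by auto
  have db: "((\<lambda>q. B q b (v q)) has_derivative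
    (\<lambda>h. B p b (v' h) + (\<Sum>c\<in>Basis. (v p \<bullet> c) *\<^sub>R frechet_derivative (\<lambda>q. B q b c) (at p) h))) (at p)"
    if "b \<in> Basis" for b
    by (rule fam_deriv[OF U l1 dB[OF that] dv])
  have d: "((\<lambda>q. B q (u q) (v q)) has_derivative
    (\<lambda>h. B p (u' h) (v p) + (\<Sum>b\<in>Basis. (u p \<bullet> b) *\<^sub>R frechet_derivative (\<lambda>q. B q b (v q)) (at p) h))) (at p)"
  proof -
    have dd: "(\<lambda>q. B q b (v q)) differentiable (at p)" if "b \<in> Basis" for b
      using db[OF that] unfolding differentiable_def by blast
    show ?thesis by (rule fam_deriv[where L="\<lambda>q w. B q w (v q)", OF U l2 dd du])
  qed
  have fd: "frechet_derivative (\<lambda>q. B q b (v q)) (at p) = (\<lambda>h. B p b (v' h) + (\<Sum>c\<in>Basis. (v p \<bullet> c) *\<^sub>R frechet_derivative (\<lambda>q. B q b c) (at p) h))"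
    if "b \<in> Basis" for b using frechet_derivative_at[OF db[OF that]] by simp
  show ?thesis
  proof (rule has_derivative_eq_rhs[OF d], rule ext)
    fix h
    have "(\<Sum>b\<in>Basis. (u p \<bullet> b) *\<^sub>R frechet_derivative (\<lambda>q. B q b (v q)) (at p) h)
       = (\<Sum>b\<in>Basis. (u p \<bullet> b) * B p b (v' h)) + (\<Sum>b\<in>Basis. \<Sum>c\<in>Basis. (u p \<bullet> b) * (v p \<bullet> c) * frechet_derivative (\<lambda>q. B q b c) (at p) h)"
      by (simp add: fd sum.distrib sum_distrib_left algebra_simps)
    also have "(\<Sum>b\<in>Basis. (u p \<bullet> b) * B p b (v' h)) = B p (u p) (v' h)"
      using lin_exp[OF l2[OF U(2)], of "u p" "v' h"] by simp
    finally show "B p (u' h) (v p) + (\<Sum>b\<in>Basis. (u p \<bullet> b) *\<^sub>R frechet_derivative (\<lambda>q. B q b (v q)) (at p) h) =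
      B p (u' h) (v p) + B p (u p) (v' h) + (\<Sum>b\<in>Basis. \<Sum>c\<in>Basis. (u p \<bullet> b) * (v p \<bullet> c) * frechet_derivative (\<lambda>q. B q b c) (at p) h)"
      by simp
  qed
qed


context
  fixes n :: nat and U :: "'a::euclidean_space set" and phi :: "'a \<Rightarrow> 'a \<Rightarrow> 'a" and xi :: "'a \<Rightarrow> 'a"
    and eta :: "'a \<Rightarrow> 'a \<Rightarrow> real" and g :: "'a \<Rightarrow> 'a \<Rightarrow> 'a \<Rightarrow> real" and p :: 'a
  assumes RPM: "riem_pi_manifold n U phi xi eta g" and pU: "p \<in> U"
begin

lemma oU: "open U" using RPM unfolding riem_pi_manifold_def by blast

lemma pis_at: assumes q: "q \<in> U" shows "pis n (phi q) (xi q) (eta q) (g q)"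
proof -
  have dim: "DIM('a) = 2 * n + 1" using RPM unfolding riem_pi_manifold_def by blast
  have P: "\<forall>p\<in>U.
        linear (phi p) \<and> linear (eta p) \<and> bilinear (g p) \<and>
        (\<forall>x y. g p x y = g p y x) \<and> (\<forall>x. x \<noteq> 0 \<longrightarrow> g p x x > 0) \<and>
        phi p (xi p) = 0 \<and>
        (\<forall>x. phi p (phi p x) = x - eta p x *\<^sub>R xi p) \<and>
        (\<forall>x. eta p (phi p x) = 0) \<and>
        eta p (xi p) = 1 \<and>
        (\<Sum>b\<in>Basis. phi p b \<bullet> b) = 0 \<and>
        (\<forall>x y. g p (phi p x) (phi p y) = g p x y - eta p x * eta p y)"
    using RPM unfolding riem_pi_manifold_def by blast
  from P q have Q: "linear (phi q) \<and> linear (eta q) \<and> bilinear (g q) \<and>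
        (\<forall>x y. g q x y = g q y x) \<and> (\<forall>x. x \<noteq> 0 \<longrightarrow> g q x x > 0) \<and>
        phi q (xi q) = 0 \<and>
        (\<forall>x. phi q (phi q x) = x - eta q x *\<^sub>R xi q) \<and>
        (\<forall>x. eta q (phi q x) = 0) \<and>
        eta q (xi q) = 1 \<and>
        (\<Sum>b\<in>Basis. phi q b \<bullet> b) = 0 \<and>
        (\<forall>x y. g q (phi q x) (phi q y) = g q x y - eta q x * eta q y)" by (rule bspec)
  show ?thesis
    by (rule pis.intro) (use Q dim in blast)+
qed

lemma smooth_comps: assumes "b \<in> Basis" "c \<in> Basis"
  shows "smooth_on U (\<lambda>q. phi q b \<bullet> c)" "smooth_on U (\<lambda>q. xi q \<bullet> b)" "smooth_on U (\<lambda>q. eta q b)"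
    "smooth_on U (\<lambda>q. g q b c)"
  using RPM assms unfolding riem_pi_manifold_def by blast+

lemma d_phi_b: "b \<in> Basis \<Longrightarrow> (\<lambda>q. phi q b) differentiable (at p)"
  by (rule vec_diff) (rule smooth_diff[OF smooth_comps(1) oU pU])
lemma d_xi: "xi differentiable (at p)"
  by (rule vec_diff) (rule smooth_diff[OF smooth_comps(2) oU pU], assumption+)
lemma d_eta_b: "b \<in> Basis \<Longrightarrow> (\<lambda>q. eta q b) differentiable (at p)"
  by (rule smooth_diff[OF smooth_comps(3) oU pU]) auto
lemma d_g_bc: "b \<in> Basis \<Longrightarrow> c \<in> Basis \<Longrightarrow> (\<lambda>q. g q b c) differentiable (at p)"
  by (rule smooth_diff[OF smooth_comps(4) oU pU])

definition "Dp h y = (\<Sum>b\<in>Basis. (y \<bullet> b) *\<^sub>R frechet_derivative (\<lambda>q. phi q b) (at p) h)"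
definition "Dx = frechet_derivative xi (at p)"
definition "De h y = (\<Sum>b\<in>Basis. (y \<bullet> b) *\<^sub>R frechet_derivative (\<lambda>q. eta q b) (at p) h)"
definition "Dg h y z = (\<Sum>b\<in>Basis. \<Sum>c\<in>Basis. (y \<bullet> b) * (z \<bullet> c) * frechet_derivative (\<lambda>q. g q b c) (at p) h)"

lemma lin_phi: "q \<in> U \<Longrightarrow> linear (phi q)" using pis_at pis.lf by blast
lemma lin_eta: "q \<in> U \<Longrightarrow> linear (eta q)" using pis_at pis.lt by blast
lemma bil_g: "q \<in> U \<Longrightarrow> bilinear (g q)" using pis_at pis.bG by blast

lemma H1: "(u has_derivative u') (at p) \<Longrightarrow> ((\<lambda>q. phi q (u q)) has_derivative (\<lambda>h. phi p (u' h) + Dp h (u p))) (at p)"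
  unfolding Dp_def by (rule fam_deriv[OF oU pU lin_phi d_phi_b])
lemma H2: "(u has_derivative u') (at p) \<Longrightarrow> ((\<lambda>q. eta q (u q)) has_derivative (\<lambda>h. eta p (u' h) + De h (u p))) (at p)"
  unfolding De_def by (rule fam_deriv[OF oU pU lin_eta d_eta_b])
lemma H3: "(u has_derivative u') (at p) \<Longrightarrow> (v has_derivative v') (at p) \<Longrightarrow>
   ((\<lambda>q. g q (u q) (v q)) has_derivative (\<lambda>h. g p (u' h) (v p) + g p (u p) (v' h) + Dg h (u p) (v p))) (at p)"
  unfolding Dg_def by (rule fam2_deriv[OF oU pU bil_g d_g_bc])
lemma Hx: "(xi has_derivative Dx) (at p)"
  unfolding Dx_def using d_xi frechet_derivative_works by blast

interpretation P0: pis n "phi p" "xi p" "eta p" "g p" by (rule pis_at[OF pU])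

lemma H1c: "((\<lambda>q. phi q y) has_derivative (\<lambda>h. Dp h y)) (at p)"
  using H1[OF has_derivative_const[of y]] by (simp add: P0.fsimps)
lemma H2c: "((\<lambda>q. eta q y) has_derivative (\<lambda>h. De h y)) (at p)"
  using H2[OF has_derivative_const[of y]] by (simp add: P0.tsimps)
lemma H3c: "((\<lambda>q. g q y z) has_derivative (\<lambda>h. Dg h y z)) (at p)"
  using H3[OF has_derivative_const[of y] has_derivative_const[of z]] by simp

lemma deq: assumes "(f1 has_derivative f1') (at p)" "(f2 has_derivative f2') (at p)" "\<And>q. q \<in> U \<Longrightarrow> f1 q = f2 q"
  shows "f1' = f2'"
  using has_derivative_transform_within_open[OF assms(1) oU pU assms(3)] assms(2) has_derivative_unique by blast

lemma pder_p: "pder n (phi p) (xi p) (eta p) (g p) Dp Dx De Dg"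
proof (intro pder.intro pder_axioms.intro)
  show "pis n (phi p) (xi p) (eta p) (g p)" by (rule pis_at[OF pU])
  show "linear (\<lambda>h. Dp h y)" for y using has_derivative_linear[OF H1c] .
  show "linear (Dp h)" for h unfolding Dp_def
    by (rule linearI) (simp_all add: inner_add_left scaleR_add_left sum.distrib scaleR_sum_right)
  show "tri Dg" unfolding tri_def
  proof (intro conjI allI)
    show "linear (\<lambda>h. Dg h y z)" for y z using has_derivative_linear[OF H3c] .
    show "linear (\<lambda>y. Dg h y z)" for h z unfolding Dg_def
      by (rule linearI) (simp_all add: inner_add_left algebra_simps sum.distrib sum_distrib_left)
    show "linear (\<lambda>z. Dg h y z)" for h y unfolding Dg_def
      by (rule linearI) (simp_all add: inner_add_left algebra_simps sum.distrib sum_distrib_left)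
  qed
  show "Dg h y z = Dg h z y" for h y z
  proof -
    have "(\<lambda>h. Dg h y z) = (\<lambda>h. Dg h z y)"
      by (rule deq[OF H3c H3c]) (rule pis.Gsym[OF pis_at])
    from fun_cong[OF this, of h] show ?thesis by simp
  qed
  show "Dg h (phi p y) z + g p (Dp h y) z = Dg h y (phi p z) + g p y (Dp h z)" for h y z
  proof -
    have "(\<lambda>h. g p (Dp h y) z + g p (phi p y) 0 + Dg h (phi p y) z) = (\<lambda>h. g p 0 (phi p z) + g p y (Dp h z) + Dg h y (phi p z))"
      by (rule deq[OF H3[OF H1c has_derivative_const] H3[OF has_derivative_const H1c]]) (rule pis.Gf[OF pis_at])
    from fun_cong[OF this, of h] show ?thesis by (simp add: add.commute)
  qed
  show "Dp h (phi p y) + phi p (Dp h y) = - (De h y *\<^sub>R xi p + eta p y *\<^sub>R Dx h)" for h y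
  proof -
    have d2: "((\<lambda>q. y - eta q y *\<^sub>R xi q) has_derivative (\<lambda>h. 0 - (eta p y *\<^sub>R Dx h + De h y *\<^sub>R xi p))) (at p)"
      by (intro has_derivative_diff has_derivative_const has_derivative_scaleR H2c Hx)
    have "(\<lambda>h. phi p (Dp h y) + Dp h (phi p y)) = (\<lambda>h. 0 - (eta p y *\<^sub>R Dx h + De h y *\<^sub>R xi p))"
      by (rule deq[OF H1[OF H1c] d2]) (rule pis.ff[OF pis_at])
    from fun_cong[OF this, of h] have "phi p (Dp h y) + Dp h (phi p y) = 0 - (eta p y *\<^sub>R Dx h + De h y *\<^sub>R xi p)" by simp
    then show ?thesis by (simp add: algebra_simps)
  qed
  show "Dp h (xi p) + phi p (Dx h) = 0" for h
  proof -
    have "(\<lambda>h. phi p (Dx h) + Dp h (xi p)) = (\<lambda>h. 0)"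
      by (rule deq[OF H1[OF Hx] has_derivative_const]) (rule pis.fe[OF pis_at])
    from fun_cong[OF this, of h] have "phi p (Dx h) + Dp h (xi p) = 0" by simp
    then show ?thesis by (simp add: algebra_simps)
  qed
  show "Dg h (xi p) (xi p) + 2 * g p (Dx h) (xi p) = 0" for h
  proof -
    have "(\<lambda>h. g p (Dx h) (xi p) + g p (xi p) (Dx h) + Dg h (xi p) (xi p)) = (\<lambda>h. 0)"
      by (rule deq[OF H3[OF Hx Hx] has_derivative_const]) (use pis.Ge[OF pis_at] pis.te[OF pis_at] in simp)
    from fun_cong[OF this, of h] have "g p (Dx h) (xi p) + g p (xi p) (Dx h) + Dg h (xi p) (xi p) = 0" by simp
    then show ?thesis using P0.Gsym[of "xi p" "Dx h"] by simp
  qed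
qed


interpretation P: pder n "phi p" "xi p" "eta p" "g p" Dp Dx De Dg by (rule pder_p)

lemma fdp: "frechet_derivative (\<lambda>q. phi q y) (at p) = (\<lambda>h. Dp h y)"
  using frechet_derivative_at[OF H1c] by simp
lemma fde: "frechet_derivative (\<lambda>q. eta q y) (at p) = (\<lambda>h. De h y)"
  using frechet_derivative_at[OF H2c] by simp
lemma fdg: "frechet_derivative (\<lambda>q. g q y z) (at p) = (\<lambda>h. Dg h y z)"
  using frechet_derivative_at[OF H3c] by simp

lemma chr_eq: "g p (christoffel g p x w) z = P.K x w z"
proof -
  have c: "christoffel g p x w = (THE v. \<forall>z. g p v z = P.K x w z)"
    unfolding christoffel_def fdg P.K_def by simp
  have "linear (P.K x w)" using tri_lin(3)[OF P.tK] .
  from theI'[OF P0.riesz[OF this]] show ?thesis unfolding c by blast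
qed

lemma Ftens: "F_tensor g phi p x y z = P.FF x y z"
proof -
  have "F_tensor g phi p x y z = g p (Dp x y + christoffel g p x (phi p y) - phi p (christoffel g p x y)) z"
    unfolding F_tensor_def nabla_phi_def nabla_def fdp by simp
  also have "\<dots> = P.FF x y z"
    unfolding P.FF_def by (simp add: P0.Glsimps P0.Gf chr_eq)
  finally show ?thesis .
qed

lemma neq: "nabla_eta g eta p x y = - P.FF x (phi p y) (xi p)"
proof -
  have "nabla_eta g eta p x y = De x y - g p (christoffel g p x y) (xi p)"
    unfolding nabla_eta_def nabla_def fde by simp
  also have "\<dots> = - P.FF x (phi p y) (xi p)" using P.ne_FF[of x y] chr_eq[of x y "xi p"] by simp
  finally show ?thesis .
qed

lemma Nij: "g p (nijenhuis g phi xi eta p a b) z = NE (phi p) (xi p) (eta p) P.FF a b z"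
proof -
  have F: "g p (nabla_phi g phi p x y) w = P.FF x y w" for x y w using Ftens[of x y w] unfolding F_tensor_def .
  show ?thesis unfolding nijenhuis_def NE_def
    by (simp add: P0.Glsimps P0.Gf F neq algebra_simps)
qed

lemma point_main: "in_class_sum U1_classes n (phi p) (xi p) (eta p) (g p) (F_tensor g phi p)
   \<longleftrightarrow> (\<forall>x y. nijenhuis g phi xi eta p (phi p x) (phi p y) = 0)"
proof -
  have FT: "F_tensor g phi p = P.FF" by (intro ext) (rule Ftens)
  have N0: "nijenhuis g phi xi eta p a b = 0 \<longleftrightarrow> (\<forall>z. NE (phi p) (xi p) (eta p) P.FF a b z = 0)" for a b
  proof
    assume "nijenhuis g phi xi eta p a b = 0"
    then show "\<forall>z. NE (phi p) (xi p) (eta p) P.FF a b z = 0" using Nij[of a b] by simp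
  next
    assume "\<forall>z. NE (phi p) (xi p) (eta p) P.FF a b z = 0"
    then have "g p (nijenhuis g phi xi eta p a b) (nijenhuis g phi xi eta p a b) = 0" using Nij by simp
    then show "nijenhuis g phi xi eta p a b = 0" using P0.Gpos by force
  qed
  show ?thesis unfolding FT P0.alg_main[OF P.FS_FF] N0 by blast
qed
end


theorem lemma2p2:
  fixes n :: nat and U :: "'a::euclidean_space set"
    and phi :: "'a \<Rightarrow> 'a \<Rightarrow> 'a" and xi :: "'a \<Rightarrow> 'a"
    and eta :: "'a \<Rightarrow> 'a \<Rightarrow> real" and g :: "'a \<Rightarrow> 'a \<Rightarrow> 'a \<Rightarrow> real"
  assumes "riem_pi_manifold n U phi xi eta g"
  shows "(\<forall>p\<in>U. in_class_sum U1_classes n (phi p) (xi p) (eta p) (g p) (F_tensor g phi p))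
     \<longleftrightarrow> (\<forall>p\<in>U. \<forall>x y. nijenhuis g phi xi eta p (phi p x) (phi p y) = 0)"
proof -
  have "\<And>p. p \<in> U \<Longrightarrow> (in_class_sum U1_classes n (phi p) (xi p) (eta p) (g p) (F_tensor g phi p)
     \<longleftrightarrow> (\<forall>x y. nijenhuis g phi xi eta p (phi p x) (phi p y) = 0))"
    using point_main[OF assms] by blast
  then show ?thesis by blast
qed

end
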